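(* Observe $\mathbf y=\mathbf f+\boldsymbol\xi\in\mathbf R^n$, where the random vector $\boldsymbol\xi$ satisfies $\mathbb E\exp(\alpha^T\boldsymbol\xi)\le\exp(\|\alpha\|_2^2K^2/2)$ for all $\alpha\in\mathbf R^n$, and $K>0$ is the smallest positive number with this property. Let $M\ge2$ and, for $j=1,\dots,M$, let $\mathbf b_j\in\mathbf R^n$ and let $A_j$ be an $n\times n$ matrix with $A_j=A_j^T=A_j^2$ (both deterministic); $\hat{\boldsymbol\mu}_j=A_j\mathbf y+\mathbf b_j$. Let $(\pi_1,\dots,\pi_M)\in\Lambda^M$ with $\mathrm{Tr}(A_j)\le\log(\pi_j^{-1})$ for all $j$. Let $\hat K>0$ be a given estimator, $\delta:=\mathbb P(\hat K^2<K^2)$, and let $\hat{\boldsymbol\theta}\in\arg\min_{\boldsymbol\theta\in\Lambda^M}U(\boldsymbol\theta)$. Then for all $x>0$, with probability at least $1-\delta-2e^{-x}$, \[\|\hat{\boldsymbol\mu}_{\hat{\boldsymbol\theta}}-\mathbf f\|_2^2\le\min_{j=1,\dots,M}\Big(\|\hat{\boldsymbol\mu}_j-\mathbf f\|_2^2+64\hat K^2\log\frac1{\pi_j}\Big)+28K^2x.\]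
   Context: $\Lambda^M=\{\boldsymbol\theta\in\mathbf R^M:\sum_j\theta_j=1,\theta_j\ge0\}$. For $\boldsymbol\theta\in\Lambda^M$: $A_{\boldsymbol\theta}=\sum_j\theta_jA_j$, $\mathbf b_{\boldsymbol\theta}=\sum_j\theta_j\mathbf b_j$, $\hat{\boldsymbol\mu}_{\boldsymbol\theta}=A_{\boldsymbol\theta}\mathbf y+\mathbf b_{\boldsymbol\theta}$, $\mathrm{pen}(\boldsymbol\theta)=\sum_j\theta_j\|\hat{\boldsymbol\mu}_{\boldsymbol\theta}-\hat{\boldsymbol\mu}_j\|_2^2$, and $U(\boldsymbol\theta)=\|\hat{\boldsymbol\mu}_{\boldsymbol\theta}\|_2^2-2\mathbf y^T\hat{\boldsymbol\mu}_{\boldsymbol\theta}+\frac12\mathrm{pen}(\boldsymbol\theta)+32\hat K^2\sum_{j=1}^M\theta_j\log\frac1{\pi_j}$. *)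

theory Defs
  imports "HOL-Probability.Probability"
begin

definition Lsimplex :: "nat \<Rightarrow> (nat \<Rightarrow> real) set" where
  "Lsimplex M = {\<theta>. (\<forall>j\<in>{1..M}. 0 \<le> \<theta> j) \<and> (\<Sum>j=1..M. \<theta> j) = 1}"

definition A_theta :: "nat \<Rightarrow> (nat \<Rightarrow> real^'n^'n) \<Rightarrow> (nat \<Rightarrow> real) \<Rightarrow> real^'n^'n" where
  "A_theta M A \<theta> = (\<Sum>j=1..M. \<theta> j *\<^sub>R A j)"

definition b_theta :: "nat \<Rightarrow> (nat \<Rightarrow> real^'n) \<Rightarrow> (nat \<Rightarrow> real) \<Rightarrow> real^'n" where
  "b_theta M b \<theta> = (\<Sum>j=1..M. \<theta> j *\<^sub>R b j)"

definition mu_hat :: "(nat \<Rightarrow> real^'n^'n) \<Rightarrow> (nat \<Rightarrow> real^'n) \<Rightarrow> real^'n \<Rightarrow> nat \<Rightarrow> real^'n" where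
  "mu_hat A b y j = A j *v y + b j"

definition mu_theta :: "nat \<Rightarrow> (nat \<Rightarrow> real^'n^'n) \<Rightarrow> (nat \<Rightarrow> real^'n) \<Rightarrow> real^'n \<Rightarrow> (nat \<Rightarrow> real) \<Rightarrow> real^'n" where
  "mu_theta M A b y \<theta> = A_theta M A \<theta> *v y + b_theta M b \<theta>"

definition pen :: "nat \<Rightarrow> (nat \<Rightarrow> real^'n^'n) \<Rightarrow> (nat \<Rightarrow> real^'n) \<Rightarrow> real^'n \<Rightarrow> (nat \<Rightarrow> real) \<Rightarrow> real" where
  "pen M A b y \<theta> = (\<Sum>j=1..M. \<theta> j * (norm (mu_theta M A b y \<theta> - mu_hat A b y j))\<^sup>2)"

text \<open>The criterion U(theta); Kh is the value of the estimator hat K, log is the natural log.\<close>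
definition U :: "nat \<Rightarrow> (nat \<Rightarrow> real^'n^'n) \<Rightarrow> (nat \<Rightarrow> real^'n) \<Rightarrow> (nat \<Rightarrow> real) \<Rightarrow> real \<Rightarrow> real^'n \<Rightarrow> (nat \<Rightarrow> real) \<Rightarrow> real" where
  "U M A b \<pi> Kh y \<theta> = (norm (mu_theta M A b y \<theta>))\<^sup>2 - 2 * (y \<bullet> mu_theta M A b y \<theta>)
     + pen M A b y \<theta> / 2 + 32 * Kh\<^sup>2 * (\<Sum>j=1..M. \<theta> j * ln (1 / \<pi> j))"

text \<open>Sub-Gaussian moment-generating-function bound with parameter K
  (expectation of a nonnegative variable, taken as a Lebesgue integral in [0,\<infinity>]).\<close>
definition subgaussian :: "'a measure \<Rightarrow> ('a \<Rightarrow> real^'n) \<Rightarrow> real \<Rightarrow> bool" where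
  "subgaussian P \<xi> K \<longleftrightarrow>
     (\<forall>\<alpha>::real^'n. (\<integral>\<^sup>+ \<omega>. ennreal (exp (\<alpha> \<bullet> \<xi> \<omega>)) \<partial>P) \<le> ennreal (exp ((norm \<alpha>)\<^sup>2 * K\<^sup>2 / 2)))"

end

theory Submission
  imports Defs "HOL-Probability.Probability"
begin

lemma nn_normal_density: "0 < sg \<Longrightarrow> (\<integral>\<^sup>+g. ennreal (normal_density m sg g) \<partial>lborel) = 1"
  by (subst nn_integral_eq_integral) auto

lemma gauss_mgf:
  "(\<integral>\<^sup>+g. ennreal (std_normal_density g * exp (a*g)) \<partial>lborel) = ennreal (exp (a\<^sup>2/2))"
proof -
  have eq: "std_normal_density g * exp (a*g) = exp (a\<^sup>2/2) * normal_density a 1 g" for g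
  proof -
    have "exp (- g\<^sup>2 / 2) * exp (a*g) = exp (a\<^sup>2/2) * exp (-(g - a)\<^sup>2 / 2)"
      unfolding exp_add[symmetric] by (rule arg_cong[where f=exp]) (simp add: power2_eq_square field_simps)
    then show ?thesis by (simp add: std_normal_density_def normal_density_def)
  qed
  have "(\<integral>\<^sup>+g. ennreal (std_normal_density g * exp (a*g)) \<partial>lborel)
      = (\<integral>\<^sup>+g. ennreal (exp (a\<^sup>2/2)) * ennreal (normal_density a 1 g) \<partial>lborel)"
    by (simp add: eq ennreal_mult)
  also have "\<dots> = ennreal (exp (a\<^sup>2/2)) * (\<integral>\<^sup>+g. ennreal (normal_density a 1 g) \<partial>lborel)"
    by (rule nn_integral_cmult) auto
  finally show ?thesis by (simp add: nn_normal_density)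
qed

lemma gauss_sq:
  assumes "c < 1/2"
  shows "(\<integral>\<^sup>+g. ennreal (std_normal_density g * exp (c*g\<^sup>2)) \<partial>lborel) = ennreal (1 / sqrt (1 - 2*c))"
proof -
  define \<sigma> where "\<sigma> = 1 / sqrt (1 - 2*c)"
  have pos: "1 - 2*c > 0" using assms by simp
  have sg: "\<sigma> > 0" using pos by (simp add: \<sigma>_def)
  have s2: "\<sigma>\<^sup>2 = 1 / (1 - 2*c)" using pos by (simp add: \<sigma>_def power_divide)
  have eq: "std_normal_density g * exp (c*g\<^sup>2) = \<sigma> * normal_density 0 \<sigma> g" for g
  proof -
    have e1: "exp (- g\<^sup>2 / 2) * exp (c*g\<^sup>2) = exp (-(g - 0)\<^sup>2 / (2 * \<sigma>\<^sup>2))"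
      using pos by (simp add: s2 exp_add[symmetric] field_simps)
    have e2: "sqrt (2 * pi * \<sigma>\<^sup>2) = sqrt (2*pi) * \<sigma>"
      using pos by (simp add: real_sqrt_mult \<sigma>_def)
    show ?thesis unfolding std_normal_density_def normal_density_def e1[symmetric] e2
      using pos by (simp add: \<sigma>_def field_simps)
  qed
  have "(\<integral>\<^sup>+g. ennreal (std_normal_density g * exp (c*g\<^sup>2)) \<partial>lborel)
      = (\<integral>\<^sup>+g. ennreal \<sigma> * ennreal (normal_density 0 \<sigma> g) \<partial>lborel)"
    using sg by (simp add: eq ennreal_mult)
  also have "\<dots> = ennreal \<sigma> * (\<integral>\<^sup>+g. ennreal (normal_density 0 \<sigma> g) \<partial>lborel)"
    by (rule nn_integral_cmult) auto
  finally show ?thesis using pos by (simp add: nn_normal_density \<sigma>_def)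
qed

lemma mgf_orth:
  fixes P :: "'a measure" and \<xi> :: "'a \<Rightarrow> real^'n" and us :: "(real^'n) list"
  assumes P: "prob_space P" and xm: "\<xi> \<in> borel_measurable P" and sg: "subgaussian P \<xi> K"
    and l0: "0 \<le> l" and l1: "2*l*K\<^sup>2 < 1"
  shows "distinct us \<Longrightarrow> (\<forall>u\<in>set us. norm u = 1) \<Longrightarrow> (\<forall>u\<in>set us. \<forall>v\<in>set us. u \<noteq> v \<longrightarrow> u \<bullet> v = 0)
    \<Longrightarrow> (\<forall>u\<in>set us. u \<bullet> w = 0) \<Longrightarrow>
    (\<integral>\<^sup>+\<omega>. ennreal (exp (l * (\<Sum>u\<leftarrow>us. (u \<bullet> \<xi> \<omega>)\<^sup>2) + w \<bullet> \<xi> \<omega>)) \<partial>P)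
      \<le> ennreal ((1 / sqrt (1 - 2*l*K\<^sup>2)) ^ length us * exp (K\<^sup>2 * (norm w)\<^sup>2 / 2))"
proof (induction us arbitrary: w)
  case Nil
  then show ?case using sg unfolding subgaussian_def by (simp add: mult.commute)
next
  case (Cons u us)
  interpret P: prob_space P by (rule P)
  interpret pair_sigma_finite P lborel
    by (simp add: pair_sigma_finite_def P.sigma_finite_measure_axioms lborel.sigma_finite_measure_axioms)
  define C where "C = 1 / sqrt (1 - 2*l*K\<^sup>2)"
  have C0: "C \<ge> 0" unfolding C_def using l1 by simp
  define c where "c = sqrt (2*l)"
  have c2: "c\<^sup>2 = 2*l" using l0 by (simp add: c_def)
  let ?S = "\<lambda>\<omega>. (\<Sum>v\<leftarrow>us. (v \<bullet> \<xi> \<omega>)\<^sup>2)"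
  let ?F = "\<lambda>\<omega> g. ennreal (std_normal_density g * exp (l * ?S \<omega> + (w + (c*g) *\<^sub>R u) \<bullet> \<xi> \<omega>))"
  have pw: "ennreal (exp (l * (\<Sum>v\<leftarrow>u#us. (v \<bullet> \<xi> \<omega>)\<^sup>2) + w \<bullet> \<xi> \<omega>)) = (\<integral>\<^sup>+g. ?F \<omega> g \<partial>lborel)" for \<omega>
  proof -
    have "(\<integral>\<^sup>+g. ?F \<omega> g \<partial>lborel) = (\<integral>\<^sup>+g. ennreal (exp (l * ?S \<omega> + w \<bullet> \<xi> \<omega>)) *
         ennreal (std_normal_density g * exp ((c * (u \<bullet> \<xi> \<omega>)) * g)) \<partial>lborel)"
      by (intro nn_integral_cong) (simp add: ennreal_mult[symmetric] inner_add_left exp_add algebra_simps)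
    also have "\<dots> = ennreal (exp (l * ?S \<omega> + w \<bullet> \<xi> \<omega>)) * (\<integral>\<^sup>+g.
         ennreal (std_normal_density g * exp ((c * (u \<bullet> \<xi> \<omega>)) * g)) \<partial>lborel)"
      by (rule nn_integral_cmult) auto
    also have "\<dots> = ennreal (exp (l * ?S \<omega> + w \<bullet> \<xi> \<omega>)) * ennreal (exp ((c * (u \<bullet> \<xi> \<omega>))\<^sup>2/2))"
      by (simp add: gauss_mgf)
    also have "\<dots> = ennreal (exp (l * (\<Sum>v\<leftarrow>u#us. (v \<bullet> \<xi> \<omega>)\<^sup>2) + w \<bullet> \<xi> \<omega>))"
      by (simp add: ennreal_mult[symmetric] exp_add[symmetric] power_mult_distrib c2 algebra_simps)
    finally show ?thesis by simp
  qed
  have mSb: "(\<lambda>z::real^'n. \<Sum>v\<leftarrow>vs. (v \<bullet> z)\<^sup>2) \<in> borel_measurable borel" for vs :: "(real^'n) list"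
    by (induction vs) auto
  have mSP[measurable]: "(\<lambda>\<omega>. ?S \<omega>) \<in> borel_measurable P"
    by (rule measurable_compose[OF xm mSb])
  have mP[measurable]: "(\<lambda>\<omega>. v \<bullet> \<xi> \<omega>) \<in> borel_measurable P" for v :: "real^'n"
    by (rule measurable_compose[OF xm]) simp
  have mS: "(\<lambda>x. ?S (fst x)) \<in> borel_measurable (P \<Otimes>\<^sub>M lborel)"
    by (rule measurable_compose[OF measurable_compose[OF measurable_fst xm] mSb])
  have mi: "(\<lambda>x. v \<bullet> \<xi> (fst x)) \<in> borel_measurable (P \<Otimes>\<^sub>M lborel)" for v :: "real^'n"
    by (rule measurable_compose[OF measurable_compose[OF measurable_fst xm]]) simp
  have Feq: "case_prod ?F = (\<lambda>x. ennreal (std_normal_density (snd x) * exp (l * ?S (fst x) + (w \<bullet> \<xi> (fst x) + c * snd x * (u \<bullet> \<xi> (fst x))))))"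
    by (auto simp: inner_add_left fun_eq_iff)
  have meas: "case_prod ?F \<in> borel_measurable (P \<Otimes>\<^sub>M lborel)"
    unfolding Feq using mS mi[of w] mi[of u] by measurable
  have "(\<integral>\<^sup>+\<omega>. ennreal (exp (l * (\<Sum>v\<leftarrow>u#us. (v \<bullet> \<xi> \<omega>)\<^sup>2) + w \<bullet> \<xi> \<omega>)) \<partial>P)
     = (\<integral>\<^sup>+\<omega>. (\<integral>\<^sup>+g. ?F \<omega> g \<partial>lborel) \<partial>P)" by (rule nn_integral_cong) (rule pw)
  also have "\<dots> = (\<integral>\<^sup>+g. (\<integral>\<^sup>+\<omega>. ?F \<omega> g \<partial>P) \<partial>lborel)"
    by (rule Fubini'[OF meas, symmetric])
  also have "\<dots> \<le> (\<integral>\<^sup>+g. ennreal (C ^ length us * exp (K\<^sup>2 * (norm w)\<^sup>2 / 2)) *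
        ennreal (std_normal_density g * exp ((l*K\<^sup>2) * g\<^sup>2)) \<partial>lborel)"
  proof (intro nn_integral_mono)
    fix g
    have orth: "\<forall>v\<in>set us. v \<bullet> (w + (c*g) *\<^sub>R u) = 0"
      using Cons.prems by (auto simp: inner_add_right inner_commute)
    have IH: "(\<integral>\<^sup>+\<omega>. ennreal (exp (l * ?S \<omega> + (w + (c*g) *\<^sub>R u) \<bullet> \<xi> \<omega>)) \<partial>P)
       \<le> ennreal (C ^ length us * exp (K\<^sup>2 * (norm (w + (c*g) *\<^sub>R u))\<^sup>2 / 2))"
      unfolding C_def using Cons.prems orth by (intro Cons.IH) auto
    have nrm: "(norm (w + (c*g) *\<^sub>R u))\<^sup>2 = (norm w)\<^sup>2 + 2*l*g\<^sup>2"
    proof -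
      have "u \<bullet> u = 1" using Cons.prems by (simp add: dot_square_norm)
      moreover have "w \<bullet> u = 0" using Cons.prems by (simp add: inner_commute)
      moreover have "c * c = 2 * l" using c2 by (simp add: power2_eq_square)
      ultimately show ?thesis
        unfolding power2_norm_eq_inner
        apply (simp add: inner_add_left inner_add_right inner_commute algebra_simps)
        by (simp add: mult.assoc[symmetric] power2_eq_square)
    qed
    have "(\<integral>\<^sup>+\<omega>. ?F \<omega> g \<partial>P) = ennreal (std_normal_density g) *
        (\<integral>\<^sup>+\<omega>. ennreal (exp (l * ?S \<omega> + (w + (c*g) *\<^sub>R u) \<bullet> \<xi> \<omega>)) \<partial>P)"
      by (subst nn_integral_cmult[symmetric]) (auto simp: ennreal_mult inner_add_left)
    also have "\<dots> \<le> ennreal (std_normal_density g) * ennreal (C ^ length us * exp (K\<^sup>2 * (norm (w + (c*g) *\<^sub>R u))\<^sup>2 / 2))"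
      by (rule mult_left_mono[OF IH]) simp
    also have "\<dots> = ennreal (C ^ length us * exp (K\<^sup>2 * (norm w)\<^sup>2 / 2)) *
        ennreal (std_normal_density g * exp ((l*K\<^sup>2) * g\<^sup>2))"
      using C0 by (simp add: ennreal_mult[symmetric] nrm exp_add[symmetric] algebra_simps add_divide_distrib)
    finally show "(\<integral>\<^sup>+\<omega>. ?F \<omega> g \<partial>P) \<le> ennreal (C ^ length us * exp (K\<^sup>2 * (norm w)\<^sup>2 / 2)) *
        ennreal (std_normal_density g * exp ((l*K\<^sup>2) * g\<^sup>2))" .
  qed
  also have "\<dots> = ennreal (C ^ length us * exp (K\<^sup>2 * (norm w)\<^sup>2 / 2)) *
        (\<integral>\<^sup>+g. ennreal (std_normal_density g * exp ((l*K\<^sup>2) * g\<^sup>2)) \<partial>lborel)"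
    by (rule nn_integral_cmult) auto
  also have "\<dots> = ennreal (C ^ length us * exp (K\<^sup>2 * (norm w)\<^sup>2 / 2)) * ennreal C"
    using l1 by (subst gauss_sq) (auto simp: C_def algebra_simps)
  also have "\<dots> = ennreal (C ^ length (u#us) * exp (K\<^sup>2 * (norm w)\<^sup>2 / 2))"
    using C0 by (simp add: ennreal_mult[symmetric] algebra_simps)
  finally show ?case unfolding C_def .
qed

lemma sym_mv_inner:
  fixes A :: "real^'n^'n"
  assumes "transpose A = A"
  shows "(A *v x) \<bullet> y = x \<bullet> (A *v y)"
proof -
  have "x \<bullet> adjoint ((*v) A) y = (A *v x) \<bullet> y"
    by (rule adjoint_works) (simp add: matrix_vector_mul_linear)
  then show ?thesis using assms by (simp add: adjoint_matrix)
qed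

lemma proj_basis:
  fixes A :: "real^'n^'n"
  assumes sym: "transpose A = A" and idem: "A ** A = A"
  obtains us where "distinct us" "\<forall>u\<in>set us. norm u = 1"
    "\<forall>u\<in>set us. \<forall>v\<in>set us. u \<noteq> v \<longrightarrow> u \<bullet> v = 0"
    "real (length us) = trace A"
    "\<And>z. (norm (A *v z))\<^sup>2 = (\<Sum>u\<leftarrow>us. (u \<bullet> z)\<^sup>2)"
proof -
  define S where "S = range (\<lambda>z. A *v z)"
  have sub: "subspace S" unfolding S_def
    by (rule linear_subspace_image[OF matrix_vector_mul_linear subspace_UNIV])
  obtain B where BS: "B \<subseteq> S" and orth: "pairwise orthogonal B"
    and nB: "\<And>x. x \<in> B \<Longrightarrow> norm x = 1" and ind: "independent B" and spB: "span B = S"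
    using orthonormal_basis_subspace[OF sub] by metis
  have fin: "finite B" using ind by (rule independent_imp_finite)
  obtain us where us: "set us = B" "distinct us" using finite_distinct_list[OF fin] by blast
  have idv: "A *v v = v" if vS: "v \<in> S" for v
  proof -
    obtain t where "v = A *v t" using vS unfolding S_def by blast
    then show ?thesis using idem by (simp add: matrix_vector_mul_assoc)
  qed
  have uu: "u \<bullet> u = 1" if "u \<in> B" for u using nB[OF that] by (simp add: dot_square_norm)
  have uv: "u \<bullet> v = 0" if "u \<in> B" "v \<in> B" "u \<noteq> v" for u v
    using orth that unfolding pairwise_def orthogonal_def by blast
  define p where "p z = (\<Sum>u\<in>B. (u \<bullet> z) *\<^sub>R u)" for z
  have vp: "v \<bullet> p z = v \<bullet> z" if "v \<in> B" for v z
  proof -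
    have "v \<bullet> p z = (\<Sum>u\<in>B. (u \<bullet> z) * (v \<bullet> u))" by (simp add: p_def inner_sum_right)
    also have "\<dots> = (\<Sum>u\<in>{v}. (u \<bullet> z) * (v \<bullet> u))"
      using that fin uv by (intro sum.mono_neutral_right) (auto simp: inner_commute)
    finally show ?thesis using uu[OF that] by simp
  qed
  have Ap: "A *v z = p z" for z
  proof -
    define d where "d = A *v z - p z"
    have "p z \<in> span B" unfolding p_def by (intro span_sum span_scale span_base) 
    moreover have "A *v z \<in> span B" using spB unfolding S_def by auto
    ultimately have dS: "d \<in> span B" unfolding d_def by (rule span_diff[rotated])
    have "orthogonal d v" if "v \<in> B" for v
    proof -
      have "v \<in> S" using that BS by auto
      have "v \<bullet> (A *v z) = (A *v v) \<bullet> z" using sym_mv_inner[OF sym] by simp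
      also have "\<dots> = v \<bullet> z" using idv[OF \<open>v \<in> S\<close>] by simp
      finally show ?thesis unfolding orthogonal_def d_def
        using vp[OF that] by (simp add: inner_diff_right inner_commute)
    qed
    then have "orthogonal d d" using orthogonal_to_span[OF dS] by blast
    then have "d = 0" by (simp add: orthogonal_self)
    then show ?thesis unfolding d_def by simp
  qed
  have nrm: "(norm (A *v z))\<^sup>2 = (\<Sum>u\<in>B. (u \<bullet> z)\<^sup>2)" for z
  proof -
    have "(norm (A *v z))\<^sup>2 = (A *v z) \<bullet> (A *v z)" by (simp add: dot_square_norm)
    also have "\<dots> = z \<bullet> (A *v (A *v z))" by (rule sym_mv_inner[OF sym])
    also have "\<dots> = z \<bullet> (A *v z)" using idem by (simp add: matrix_vector_mul_assoc)
    also have "\<dots> = (\<Sum>u\<in>B. (u \<bullet> z)\<^sup>2)" by (simp add: Ap p_def inner_sum_right power2_eq_square inner_commute)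
    finally show ?thesis .
  qed
  have tr: "trace A = real (card B)"
  proof -
    have "A $ i $ i = (\<Sum>u\<in>B. (u $ i)\<^sup>2)" for i
    proof -
      have "A $ i $ i = (A *v axis i 1) $ i"
        by (simp add: matrix_vector_mult_def axis_def if_distrib cong: if_cong)
      also have "\<dots> = (\<Sum>u\<in>B. (u \<bullet> axis i 1) * u $ i)" by (simp add: Ap p_def)
      finally show ?thesis by (simp add: inner_axis power2_eq_square)
    qed
    then have "trace A = (\<Sum>i\<in>UNIV. \<Sum>u\<in>B. (u $ i)\<^sup>2)" by (simp add: trace_def)
    also have "\<dots> = (\<Sum>u\<in>B. \<Sum>i\<in>UNIV. (u $ i)\<^sup>2)" by (rule sum.swap)
    also have "\<dots> = (\<Sum>u\<in>B. 1)"
    proof (rule sum.cong[OF refl])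
      fix u assume "u \<in> B"
      then have "u \<bullet> u = 1" by (rule uu)
      then show "(\<Sum>i\<in>UNIV. (u $ i)\<^sup>2) = 1" by (simp add: inner_vec_def power2_eq_square)
    qed
    finally show ?thesis by simp
  qed
  show ?thesis
  proof
    show "distinct us" by (rule us(2))
    show "\<forall>u\<in>set us. norm u = 1" using nB us by auto
    show "\<forall>u\<in>set us. \<forall>v\<in>set us. u \<noteq> v \<longrightarrow> u \<bullet> v = 0" using uv us by auto
    show "real (length us) = trace A" using tr us by (simp add: distinct_card[symmetric])
    show "(norm (A *v z))\<^sup>2 = (\<Sum>u\<leftarrow>us. (u \<bullet> z)\<^sup>2)" for z
      using nrm us by (simp add: sum_list_distinct_conv_sum_set)
  qed
qed

lemma exp_markov:
  fixes f :: "'a \<Rightarrow> real"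
  assumes f: "f \<in> borel_measurable P"
  shows "emeasure P {\<omega>\<in>space P. 0 < f \<omega>} \<le> (\<integral>\<^sup>+\<omega>. ennreal (exp (f \<omega>)) \<partial>P)"
proof -
  have S: "{\<omega>\<in>space P. 0 < f \<omega>} \<in> sets P" using f by measurable
  have "emeasure P {\<omega>\<in>space P. 0 < f \<omega>} = (\<integral>\<^sup>+\<omega>. indicator {\<omega>\<in>space P. 0 < f \<omega>} \<omega> \<partial>P)"
    using S by simp
  also have "\<dots> \<le> (\<integral>\<^sup>+\<omega>. ennreal (exp (f \<omega>)) \<partial>P)"
    by (intro nn_integral_mono) (auto split: split_indicator)
  finally show ?thesis .
qed

lemma Q_tail:
  fixes P :: "'a measure" and \<xi> :: "'a \<Rightarrow> real^'n" and A :: "real^'n^'n"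
  assumes P: "prob_space P" and xm: "\<xi> \<in> borel_measurable P" and sg: "subgaussian P \<xi> K"
    and K: "K > 0" and sym: "transpose A = A" and idem: "A ** A = A"
  shows "emeasure P {\<omega>\<in>space P. 4*K\<^sup>2*t < (norm (A *v \<xi> \<omega>))\<^sup>2} \<le> ennreal (exp (trace A / 2 - t))"
proof -
  obtain us where us: "distinct us" "\<forall>u\<in>set us. norm u = 1"
    "\<forall>u\<in>set us. \<forall>v\<in>set us. u \<noteq> v \<longrightarrow> u \<bullet> v = 0"
    "real (length us) = trace A"
    "\<And>z. (norm (A *v z))\<^sup>2 = (\<Sum>u\<leftarrow>us. (u \<bullet> z)\<^sup>2)"
    using proj_basis[OF sym idem] by blast
  define l where "l = 1 / (4*K\<^sup>2)"
  have l0: "0 \<le> l" and l1: "2*l*K\<^sup>2 < 1" using K by (auto simp: l_def)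
  have l2: "1 - 2*l*K\<^sup>2 = 1/2" using K by (simp add: l_def)
  have mQ: "(\<lambda>\<omega>. (norm (A *v \<xi> \<omega>))\<^sup>2) \<in> borel_measurable P"
    by (rule borel_measurable_continuous_on[OF _ xm]) (intro continuous_intros linear_continuous_on matrix_vector_mul_bounded_linear)
  have "{\<omega>\<in>space P. 4*K\<^sup>2*t < (norm (A *v \<xi> \<omega>))\<^sup>2} = {\<omega>\<in>space P. 0 < l * (norm (A *v \<xi> \<omega>))\<^sup>2 - t}"
    using K by (auto simp: l_def field_simps)
  also have "emeasure P \<dots> \<le> (\<integral>\<^sup>+\<omega>. ennreal (exp (l * (norm (A *v \<xi> \<omega>))\<^sup>2 - t)) \<partial>P)"
    by (rule exp_markov) (use mQ in measurable)
  also have "\<dots> = (\<integral>\<^sup>+\<omega>. ennreal (exp (- t)) * ennreal (exp (l * (\<Sum>u\<leftarrow>us. (u \<bullet> \<xi> \<omega>)\<^sup>2) + 0 \<bullet> \<xi> \<omega>)) \<partial>P)"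
    by (intro nn_integral_cong) (simp add: us(5) ennreal_mult[symmetric] exp_add[symmetric])
  also have "\<dots> = ennreal (exp (- t)) * (\<integral>\<^sup>+\<omega>. ennreal (exp (l * (\<Sum>u\<leftarrow>us. (u \<bullet> \<xi> \<omega>)\<^sup>2) + 0 \<bullet> \<xi> \<omega>)) \<partial>P)"
  proof (rule nn_integral_cmult)
    show "(\<lambda>\<omega>. ennreal (exp (l * (\<Sum>u\<leftarrow>us. (u \<bullet> \<xi> \<omega>)\<^sup>2) + 0 \<bullet> \<xi> \<omega>))) \<in> borel_measurable P"
      by (simp only: us(5)[symmetric] inner_zero_left add_0_right) (use mQ in measurable)
  qed
  also have "\<dots> \<le> ennreal (exp (- t)) * ennreal ((1 / sqrt (1 - 2*l*K\<^sup>2)) ^ length us * exp (K\<^sup>2 * (norm (0::real^'n))\<^sup>2 / 2))"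
    by (intro mult_left_mono mgf_orth[OF P xm sg l0 l1] us) simp_all
  also have "\<dots> \<le> ennreal (exp (trace A / 2 - t))"
  proof -
    have s2: "1 / sqrt (1/2) = sqrt (2::real)"
      by (simp add: real_sqrt_divide)
    have "sqrt 2 \<le> exp (1/2::real)"
    proof -
      have "(2::real) \<le> exp 1" using exp_ge_add_one_self[of 1] by simp
      also have "exp 1 = (exp (1/2::real))\<^sup>2" by (simp add: power2_eq_square exp_add[symmetric])
      finally have "sqrt 2 \<le> sqrt ((exp (1/2::real))\<^sup>2)" by (rule real_sqrt_le_mono)
      then show ?thesis by simp
    qed
    then have "sqrt 2 ^ length us \<le> exp (1/2::real) ^ length us" by (intro power_mono) auto
    also have "\<dots> = exp (trace A / 2)" using us(4) by (simp add: exp_of_nat_mult[symmetric] exp_power_int)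
    finally have "sqrt 2 ^ length us \<le> exp (trace A / 2)" .
    then have "exp (- t) * sqrt 2 ^ length us \<le> exp (- t) * exp (trace A / 2)"
      by (rule mult_left_mono) simp
    also have "\<dots> = exp (trace A / 2 - t)" by (simp add: exp_add[symmetric])
    finally have "exp (- t) * sqrt 2 ^ length us \<le> exp (trace A / 2 - t)" .
    then show ?thesis unfolding l2 s2 by (simp add: ennreal_mult[symmetric] del: ennreal_mult')
  qed
  finally show ?thesis .
qed

lemma lin_tail:
  fixes P :: "'a measure" and \<xi> :: "'a \<Rightarrow> real^'n" and d :: "real^'n"
  assumes P: "prob_space P" and xm: "\<xi> \<in> borel_measurable P" and sg: "subgaussian P \<xi> K"
    and K: "K > 0"
  shows "emeasure P {\<omega>\<in>space P. 16*K\<^sup>2*u < 2*(\<xi> \<omega> \<bullet> d) - (norm d)\<^sup>2/8} \<le> ennreal (exp (- u))"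
proof -
  define a where "a = (1/(8*K\<^sup>2)) *\<^sub>R d"
  define c where "c = - (norm d)\<^sup>2/(128*K\<^sup>2) - u"
  have mP: "(\<lambda>\<omega>. \<xi> \<omega> \<bullet> v) \<in> borel_measurable P" for v :: "real^'n"
    by (rule measurable_compose[OF xm]) simp
  have "{\<omega>\<in>space P. 16*K\<^sup>2*u < 2*(\<xi> \<omega> \<bullet> d) - (norm d)\<^sup>2/8} = {\<omega>\<in>space P. 0 < c + a \<bullet> \<xi> \<omega>}"
    using K by (auto simp: a_def c_def field_simps inner_commute)
  also have "emeasure P \<dots> \<le> (\<integral>\<^sup>+\<omega>. ennreal (exp (c + a \<bullet> \<xi> \<omega>)) \<partial>P)"
    by (rule exp_markov) (use mP[of a] in \<open>simp add: inner_commute\<close>)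
  also have "\<dots> = (\<integral>\<^sup>+\<omega>. ennreal (exp c) * ennreal (exp (a \<bullet> \<xi> \<omega>)) \<partial>P)"
    by (intro nn_integral_cong) (simp add: ennreal_mult[symmetric] exp_add)
  also have "\<dots> = ennreal (exp c) * (\<integral>\<^sup>+\<omega>. ennreal (exp (a \<bullet> \<xi> \<omega>)) \<partial>P)"
    by (rule nn_integral_cmult) (use mP[of a] in \<open>simp add: inner_commute\<close>)
  also have "\<dots> \<le> ennreal (exp c) * ennreal (exp ((norm a)\<^sup>2 * K\<^sup>2 / 2))"
    using sg unfolding subgaussian_def by (intro mult_left_mono) auto
  also have "\<dots> = ennreal (exp (- u))"
  proof -
    have "(norm a)\<^sup>2 = (norm d)\<^sup>2 / (64 * K\<^sup>2 * K\<^sup>2)"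
      using K by (simp add: a_def power_divide power_mult_distrib field_simps)
    then have "c + (norm a)\<^sup>2 * K\<^sup>2 / 2 = - u" using K by (simp add: c_def field_simps)
    then show ?thesis by (simp add: ennreal_mult[symmetric] exp_add[symmetric])
  qed
  finally show ?thesis .
qed

lemma sum_mv: "finite S \<Longrightarrow> (\<Sum>j\<in>S. c j *\<^sub>R (B j :: real^'n^'n)) *v y = (\<Sum>j\<in>S. c j *\<^sub>R (B j *v y))"
  by (induction S rule: finite_induct) (auto simp: matrix_vector_mult_add_rdistrib scaleR_matrix_vector_assoc)

lemma mu_theta_sum: "mu_theta M A b y \<theta> = (\<Sum>j=1..M. \<theta> j *\<^sub>R mu_hat A b y j)"
  unfolding mu_theta_def A_theta_def b_theta_def mu_hat_def
  by (simp add: sum_mv scaleR_add_right sum.distrib)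

lemma U_simplex:
  assumes "\<theta> \<in> Lsimplex M"
  shows "U M A b \<pi> Kh y \<theta> = (norm (mu_theta M A b y \<theta>))\<^sup>2 / 2 +
     (\<Sum>j=1..M. \<theta> j * (- 2 * (y \<bullet> mu_hat A b y j) + (norm (mu_hat A b y j))\<^sup>2 / 2 + 32 * Kh\<^sup>2 * ln (1 / \<pi> j)))"
    and "(norm (mu_theta M A b y \<theta>))\<^sup>2 \<le> (\<Sum>j=1..M. \<theta> j * (norm (mu_hat A b y j))\<^sup>2)"
proof -
  let ?m = "mu_theta M A b y \<theta>" and ?\<mu> = "mu_hat A b y"
  have s1: "(\<Sum>j=1..M. \<theta> j) = 1" using assms by (simp add: Lsimplex_def)
  have mi: "(\<Sum>j=1..M. \<theta> j * (v \<bullet> ?\<mu> j)) = v \<bullet> ?m" for v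
    by (simp add: mu_theta_sum inner_sum_right)
  have pen: "pen M A b y \<theta> = (\<Sum>j=1..M. \<theta> j * (norm (?\<mu> j))\<^sup>2) - (norm ?m)\<^sup>2"
  proof -
    have "pen M A b y \<theta> = (\<Sum>j=1..M. \<theta> j * ((norm ?m)\<^sup>2 - 2 * (?m \<bullet> ?\<mu> j) + (norm (?\<mu> j))\<^sup>2))"
      unfolding pen_def by (intro sum.cong refl) (simp add: power2_norm_eq_inner inner_diff_left inner_diff_right inner_commute)
    also have "\<dots> = (norm ?m)\<^sup>2 * (\<Sum>j=1..M. \<theta> j) - 2 * (\<Sum>j=1..M. \<theta> j * (?m \<bullet> ?\<mu> j)) + (\<Sum>j=1..M. \<theta> j * (norm (?\<mu> j))\<^sup>2)"
      by (simp add: algebra_simps sum.distrib sum_subtractf sum_distrib_left sum_distrib_right)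
    also have "\<dots> = (\<Sum>j=1..M. \<theta> j * (norm (?\<mu> j))\<^sup>2) - (norm ?m)\<^sup>2"
      unfolding s1 mi by (simp add: power2_norm_eq_inner)
    finally show ?thesis .
  qed
  have pen0: "pen M A b y \<theta> \<ge> 0"
    unfolding pen_def using assms by (intro sum_nonneg) (auto simp: Lsimplex_def)
  then show "(norm ?m)\<^sup>2 \<le> (\<Sum>j=1..M. \<theta> j * (norm (?\<mu> j))\<^sup>2)" using pen by simp
  have "(\<Sum>j=1..M. \<theta> j * (- 2 * (y \<bullet> ?\<mu> j) + (norm (?\<mu> j))\<^sup>2 / 2 + 32 * Kh\<^sup>2 * ln (1 / \<pi> j)))
     = - 2 * (\<Sum>j=1..M. \<theta> j * (y \<bullet> ?\<mu> j)) + (\<Sum>j=1..M. \<theta> j * (norm (?\<mu> j))\<^sup>2) / 2 + 32 * Kh\<^sup>2 * (\<Sum>j=1..M. \<theta> j * ln (1 / \<pi> j))"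
  proof -
    have "- 2 * (\<Sum>j=1..M. \<theta> j * (y \<bullet> ?\<mu> j)) + (\<Sum>j=1..M. \<theta> j * (norm (?\<mu> j))\<^sup>2) / 2 + 32 * Kh\<^sup>2 * (\<Sum>j=1..M. \<theta> j * ln (1 / \<pi> j))
      = (\<Sum>j=1..M. - 2 * (\<theta> j * (y \<bullet> ?\<mu> j)) + \<theta> j * (norm (?\<mu> j))\<^sup>2 / 2 + 32 * Kh\<^sup>2 * (\<theta> j * ln (1 / \<pi> j)))"
      by (simp only: sum.distrib sum_distrib_left sum_divide_distrib)
    then show ?thesis by (simp add: algebra_simps)
  qed
  then show "U M A b \<pi> Kh y \<theta> = (norm ?m)\<^sup>2 / 2 +
     (\<Sum>j=1..M. \<theta> j * (- 2 * (y \<bullet> ?\<mu> j) + (norm (?\<mu> j))\<^sup>2 / 2 + 32 * Kh\<^sup>2 * ln (1 / \<pi> j)))"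
    unfolding U_def pen mi[of y, symmetric] by (simp add: field_simps)
qed

lemma quad_nonneg:
  fixes a D :: real
  assumes D: "D \<ge> 0" and q: "\<And>t. 0 < t \<Longrightarrow> t \<le> 1 \<Longrightarrow> 0 \<le> t * a + t\<^sup>2 * D / 2"
  shows "a \<ge> 0"
proof (rule ccontr)
  assume "\<not> a \<ge> 0"
  then have a: "a < 0" by simp
  show False
  proof (cases "D = 0")
    case True
    then show ?thesis using q[of 1] a by simp
  next
    case False
    then have Dp: "D > 0" using D by simp
    define t where "t = min 1 (- a / D)"
    have t0: "0 < t" using a Dp by (simp add: t_def divide_neg_pos)
    have t1: "t \<le> 1" by (simp add: t_def)
    have "t * D \<le> - a" using Dp by (simp add: t_def min_def field_simps split: if_splits)
    then have "t * (t * D) \<le> t * (- a)" using t0 by (intro mult_left_mono) auto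
    then have "t\<^sup>2 * D \<le> t * (- a)" by (simp add: power2_eq_square mult.assoc)
    then have "t * a + t\<^sup>2 * D / 2 \<le> t * a / 2" by (simp add: field_simps)
    also have "\<dots> < 0" using t0 a by (simp add: mult_pos_neg)
    finally show ?thesis using q[OF t0 t1] by simp
  qed
qed

lemma opt_ineq:
  fixes A :: "nat \<Rightarrow> real^'n^'n"
  assumes th: "\<theta> \<in> Lsimplex M" and k: "k \<in> {1..M}"
    and opt: "\<And>\<theta>'. \<theta>' \<in> Lsimplex M \<Longrightarrow> U M A b \<pi> Kh y \<theta> \<le> U M A b \<pi> Kh y \<theta>'"
  defines "c \<equiv> \<lambda>j. - 2 * (y \<bullet> mu_hat A b y j) + (norm (mu_hat A b y j))\<^sup>2 / 2 + 32 * Kh\<^sup>2 * ln (1 / \<pi> j)"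
  shows "(norm (mu_hat A b y k - mu_theta M A b y \<theta>))\<^sup>2 / 2 \<le>
     (norm (mu_hat A b y k))\<^sup>2 / 2 + c k - (norm (mu_theta M A b y \<theta>))\<^sup>2 / 2 - (\<Sum>j=1..M. \<theta> j * c j)"
proof -
  let ?m = "mu_theta M A b y \<theta>" and ?\<mu> = "mu_hat A b y"
  define C where "C = (\<Sum>j=1..M. \<theta> j * c j)"
  define a where "a = ?m \<bullet> (?\<mu> k - ?m) + c k - C"
  define D where "D = (norm (?\<mu> k - ?m))\<^sup>2"
  define \<theta>t where "\<theta>t t = (\<lambda>j. (1 - t) * \<theta> j + t * (if j = k then 1 else 0))" for t :: real
  have s1: "(\<Sum>j=1..M. \<theta> j) = 1" and th0: "\<And>j. j \<in> {1..M} \<Longrightarrow> 0 \<le> \<theta> j"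
    using th by (auto simp: Lsimplex_def)
  have sk: "(\<Sum>j=1..M. (if j = k then f j else 0)) = f k" for f :: "nat \<Rightarrow> 'b::comm_monoid_add"
    using k by (simp add: sum.delta)
  have Uth: "U M A b \<pi> Kh y \<theta> = (norm ?m)\<^sup>2 / 2 + C"
    unfolding C_def c_def by (rule U_simplex(1)[OF th])
  have key: "0 \<le> t * a + t\<^sup>2 * D / 2" if t0: "0 < t" and t1: "t \<le> 1" for t
  proof -
    have ths: "\<theta>t t \<in> Lsimplex M"
    proof -
      have "(\<Sum>j=1..M. \<theta>t t j) = (1 - t) * (\<Sum>j=1..M. \<theta> j) + t * (\<Sum>j=1..M. (if j = k then 1 else 0))"
        by (simp only: \<theta>t_def sum.distrib sum_distrib_left)
      also have "\<dots> = 1" unfolding s1 sk by simp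
      finally show ?thesis using th0 t0 t1 unfolding Lsimplex_def \<theta>t_def by auto
    qed
    have mt: "mu_theta M A b y (\<theta>t t) = ?m + t *\<^sub>R (?\<mu> k - ?m)"
    proof -
      have "mu_theta M A b y (\<theta>t t) = (1 - t) *\<^sub>R (\<Sum>j=1..M. \<theta> j *\<^sub>R ?\<mu> j) + t *\<^sub>R (\<Sum>j=1..M. (if j = k then ?\<mu> j else 0))"
      proof -
        have "mu_theta M A b y (\<theta>t t) = (\<Sum>j=1..M. ((1 - t) * \<theta> j) *\<^sub>R ?\<mu> j + (if j = k then t *\<^sub>R ?\<mu> j else 0))"
          unfolding mu_theta_sum \<theta>t_def by (intro sum.cong refl) (simp add: scaleR_add_left)
        also have "\<dots> = (\<Sum>j=1..M. ((1 - t) * \<theta> j) *\<^sub>R ?\<mu> j) + (\<Sum>j=1..M. (if j = k then t *\<^sub>R ?\<mu> j else 0))"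
          by (rule sum.distrib)
        finally show ?thesis unfolding sk by (simp add: scaleR_sum_right)
      qed
      also have "\<dots> = ?m + t *\<^sub>R (?\<mu> k - ?m)" using k by (simp add: sk mu_theta_sum algebra_simps)
      finally show ?thesis .
    qed
    have ct: "(\<Sum>j=1..M. \<theta>t t j * c j) = (1 - t) * C + t * c k"
    proof -
      have "(\<Sum>j=1..M. \<theta>t t j * c j) = (1 - t) * C + t * (\<Sum>j=1..M. (if j = k then c j else 0))"
      proof -
        have "(\<Sum>j=1..M. \<theta>t t j * c j) = (\<Sum>j=1..M. (1 - t) * (\<theta> j * c j) + t * (if j = k then c j else 0))"
          unfolding \<theta>t_def by (intro sum.cong refl) (simp add: algebra_simps)
        also have "\<dots> = (1 - t) * C + t * (\<Sum>j=1..M. (if j = k then c j else 0))"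
          unfolding C_def by (simp only: sum.distrib sum_distrib_left)
        finally show ?thesis .
      qed
      then show ?thesis unfolding sk .
    qed
    have "U M A b \<pi> Kh y (\<theta>t t) = (norm (mu_theta M A b y (\<theta>t t)))\<^sup>2 / 2 + (\<Sum>j=1..M. \<theta>t t j * c j)"
      unfolding c_def by (rule U_simplex(1)[OF ths])
    also have "\<dots> = (norm (?m + t *\<^sub>R (?\<mu> k - ?m)))\<^sup>2 / 2 + ((1 - t) * C + t * c k)"
      by (simp only: mt ct)
    also have "\<dots> = U M A b \<pi> Kh y \<theta> + (t * a + t\<^sup>2 * D / 2)"
      unfolding Uth a_def D_def power2_norm_eq_inner
      by (simp add: inner_add_left inner_add_right inner_diff_left inner_diff_right inner_commute power2_eq_square field_simps)
    finally show ?thesis using opt[OF ths] by simp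
  qed
  have "a \<ge> 0" by (rule quad_nonneg[OF _ key]) (simp add: D_def)
  moreover have "(norm (?\<mu> k))\<^sup>2 / 2 + c k - (norm ?m)\<^sup>2 / 2 - C = a + D / 2"
    unfolding a_def D_def power2_norm_eq_inner
    by (simp add: inner_diff_left inner_diff_right inner_commute field_simps)
  ultimately show ?thesis unfolding D_def C_def by simp
qed

lemma det_bound:
  fixes A :: "nat \<Rightarrow> real^'n^'n" and f \<xi> :: "real^'n"
  assumes th: "\<theta> \<in> Lsimplex M" and k: "k \<in> {1..M}"
    and opt: "\<And>\<theta>'. \<theta>' \<in> Lsimplex M \<Longrightarrow> U M A b \<pi> Kh (f + \<xi>) \<theta> \<le> U M A b \<pi> Kh (f + \<xi>) \<theta>'"
    and B: "\<And>j. j \<in> {1..M} \<Longrightarrow> 2 * (\<xi> \<bullet> (mu_hat A b (f + \<xi>) j - mu_hat A b (f + \<xi>) k))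
        - (norm (mu_hat A b (f + \<xi>) j - mu_hat A b (f + \<xi>) k))\<^sup>2 / 4
        \<le> 32 * Kh\<^sup>2 * (ln (1 / \<pi> j) + ln (1 / \<pi> k)) + R"
  shows "(norm (mu_theta M A b (f + \<xi>) \<theta> - f))\<^sup>2 \<le>
     (norm (mu_hat A b (f + \<xi>) k - f))\<^sup>2 + 64 * Kh\<^sup>2 * ln (1 / \<pi> k) + R"
proof -
  define y where "y = f + \<xi>"
  let ?m = "mu_theta M A b y \<theta>" and ?\<mu> = "mu_hat A b y"
  define L where "L j = ln (1 / \<pi> j)" for j
  define c where "c j = - 2 * (y \<bullet> ?\<mu> j) + (norm (?\<mu> j))\<^sup>2 / 2 + 32 * Kh\<^sup>2 * L j" for j
  define S where "S = (\<Sum>j=1..M. \<theta> j * (norm (?\<mu> j))\<^sup>2)"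
  define SL where "SL = (\<Sum>j=1..M. \<theta> j * L j)"
  have s1: "(\<Sum>j=1..M. \<theta> j) = 1" and th0: "\<And>j. j \<in> {1..M} \<Longrightarrow> 0 \<le> \<theta> j"
    using th by (auto simp: Lsimplex_def)
  have mi: "(\<Sum>j=1..M. \<theta> j * (v \<bullet> ?\<mu> j)) = v \<bullet> ?m" for v
    by (simp add: mu_theta_sum inner_sum_right)
  have o1: "(norm (?\<mu> k - ?m))\<^sup>2 / 2 \<le> (norm (?\<mu> k))\<^sup>2 / 2 + c k - (norm ?m)\<^sup>2 / 2 - (\<Sum>j=1..M. \<theta> j * c j)"
    using opt_ineq[OF th k opt[unfolded y_def[symmetric]]] unfolding c_def L_def .
  have Csum: "(\<Sum>j=1..M. \<theta> j * c j) = - 2 * (y \<bullet> ?m) + S / 2 + 32 * Kh\<^sup>2 * SL"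
  proof -
    have "- 2 * (y \<bullet> ?m) + S / 2 + 32 * Kh\<^sup>2 * SL =
       - 2 * (\<Sum>j=1..M. \<theta> j * (y \<bullet> ?\<mu> j)) + (\<Sum>j=1..M. \<theta> j * (norm (?\<mu> j))\<^sup>2) / 2 + 32 * Kh\<^sup>2 * (\<Sum>j=1..M. \<theta> j * L j)"
      unfolding mi S_def SL_def ..
    also have "\<dots> = (\<Sum>j=1..M. - 2 * (\<theta> j * (y \<bullet> ?\<mu> j)) + \<theta> j * (norm (?\<mu> j))\<^sup>2 / 2 + 32 * Kh\<^sup>2 * (\<theta> j * L j))"
      by (simp only: sum.distrib sum_distrib_left sum_divide_distrib)
    also have "\<dots> = (\<Sum>j=1..M. \<theta> j * c j)"
      unfolding c_def by (intro sum.cong refl) (simp add: algebra_simps)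
    finally show ?thesis by simp
  qed
  have o2: "(norm ?m)\<^sup>2 \<le> S" unfolding S_def by (rule U_simplex(2)[OF th])
  have Bsum: "(\<Sum>j=1..M. \<theta> j * (2 * (\<xi> \<bullet> (?\<mu> j - ?\<mu> k)) - (norm (?\<mu> j - ?\<mu> k))\<^sup>2 / 4))
      = 2 * (\<xi> \<bullet> ?m) - 2 * (\<xi> \<bullet> ?\<mu> k) - S / 4 + (?\<mu> k \<bullet> ?m) / 2 - (norm (?\<mu> k))\<^sup>2 / 4"
  proof -
    have "2 * (\<xi> \<bullet> ?m) - 2 * (\<xi> \<bullet> ?\<mu> k) - S / 4 + (?\<mu> k \<bullet> ?m) / 2 - (norm (?\<mu> k))\<^sup>2 / 4
      = 2 * (\<Sum>j=1..M. \<theta> j * (\<xi> \<bullet> ?\<mu> j)) - 2 * (\<xi> \<bullet> ?\<mu> k) * (\<Sum>j=1..M. \<theta> j)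
        - (\<Sum>j=1..M. \<theta> j * (norm (?\<mu> j))\<^sup>2) / 4 + (\<Sum>j=1..M. \<theta> j * (?\<mu> k \<bullet> ?\<mu> j)) / 2
        - (norm (?\<mu> k))\<^sup>2 / 4 * (\<Sum>j=1..M. \<theta> j)"
      unfolding mi s1 S_def by simp
    also have "\<dots> = (\<Sum>j=1..M. 2 * (\<theta> j * (\<xi> \<bullet> ?\<mu> j)) - 2 * (\<xi> \<bullet> ?\<mu> k) * \<theta> j
        - \<theta> j * (norm (?\<mu> j))\<^sup>2 / 4 + \<theta> j * (?\<mu> k \<bullet> ?\<mu> j) / 2 - (norm (?\<mu> k))\<^sup>2 / 4 * \<theta> j)"
      by (simp only: sum.distrib sum_subtractf sum_distrib_left sum_distrib_right sum_divide_distrib)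
    also have "\<dots> = (\<Sum>j=1..M. \<theta> j * (2 * (\<xi> \<bullet> (?\<mu> j - ?\<mu> k)) - (norm (?\<mu> j - ?\<mu> k))\<^sup>2 / 4))"
      by (intro sum.cong refl) (simp add: power2_norm_eq_inner inner_diff_left inner_diff_right inner_commute field_simps)
    finally show ?thesis by simp
  qed
  have o3: "(\<Sum>j=1..M. \<theta> j * (2 * (\<xi> \<bullet> (?\<mu> j - ?\<mu> k)) - (norm (?\<mu> j - ?\<mu> k))\<^sup>2 / 4))
      \<le> 32 * Kh\<^sup>2 * SL + 32 * Kh\<^sup>2 * L k + R"
  proof -
    have "(\<Sum>j=1..M. \<theta> j * (2 * (\<xi> \<bullet> (?\<mu> j - ?\<mu> k)) - (norm (?\<mu> j - ?\<mu> k))\<^sup>2 / 4))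
       \<le> (\<Sum>j=1..M. \<theta> j * (32 * Kh\<^sup>2 * (L j + L k) + R))"
      using B th0 unfolding y_def L_def by (intro sum_mono mult_left_mono) auto
    also have "\<dots> = 32 * Kh\<^sup>2 * SL + (32 * Kh\<^sup>2 * L k + R) * (\<Sum>j=1..M. \<theta> j)"
      unfolding SL_def by (simp add: sum.distrib sum_distrib_left sum_distrib_right algebra_simps)
    finally show ?thesis unfolding s1 by simp
  qed
  have o4: "0 \<le> (norm (?\<mu> k - ?m))\<^sup>2" by simp
  have yy: "y \<bullet> v = f \<bullet> v + \<xi> \<bullet> v" for v unfolding y_def by (simp add: inner_add_left)
  have n1: "(norm (?\<mu> k - ?m))\<^sup>2 = (norm (?\<mu> k))\<^sup>2 - 2 * (?\<mu> k \<bullet> ?m) + (norm ?m)\<^sup>2"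
    by (simp add: power2_norm_eq_inner inner_diff_left inner_diff_right inner_commute)
  have n2: "(norm (?m - f))\<^sup>2 = (norm ?m)\<^sup>2 - 2 * (f \<bullet> ?m) + (norm f)\<^sup>2"
    by (simp add: power2_norm_eq_inner inner_diff_left inner_diff_right inner_commute)
  have n3: "(norm (?\<mu> k - f))\<^sup>2 = (norm (?\<mu> k))\<^sup>2 - 2 * (f \<bullet> ?\<mu> k) + (norm f)\<^sup>2"
    by (simp add: power2_norm_eq_inner inner_diff_left inner_diff_right inner_commute)
  have "(norm (?m - f))\<^sup>2 \<le> (norm (?\<mu> k - f))\<^sup>2 + 64 * Kh\<^sup>2 * L k + R"
  proof -
    have o1': "(norm (?\<mu> k - ?m))\<^sup>2 / 2 \<le> (norm (?\<mu> k))\<^sup>2 / 2 + c k - (norm ?m)\<^sup>2 / 2 - (- 2 * (y \<bullet> ?m) + S / 2 + 32 * Kh\<^sup>2 * SL)"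
      using o1 unfolding Csum .
    show ?thesis using o1' o2 o3 o4 unfolding Bsum n1 n2 n3 c_def yy mult.assoc
      by (simp only: algebra_simps add_divide_distrib diff_divide_distrib; linarith)
  qed
  then show ?thesis unfolding y_def L_def .
qed

lemma norm_diff_sq_le: "(norm (a - c :: real^'n))\<^sup>2 \<le> 2 * (norm a)\<^sup>2 + 2 * (norm c)\<^sup>2"
proof -
  have "0 \<le> (norm (a + c))\<^sup>2" by simp
  then show ?thesis
    by (simp add: power2_norm_eq_inner inner_add_left inner_add_right inner_diff_left inner_diff_right inner_commute)
qed

lemma quad_form:
  fixes A :: "real^'n^'n"
  assumes "transpose A = A" "A ** A = A"
  shows "z \<bullet> (A *v z) = (norm (A *v z))\<^sup>2"
proof -
  have "(A *v z) \<bullet> (A *v z) = z \<bullet> (A *v (A *v z))" by (rule sym_mv_inner[OF assms(1)])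
  also have "\<dots> = z \<bullet> (A *v z)" using assms(2) by (simp add: matrix_vector_mul_assoc)
  finally show ?thesis by (simp add: power2_norm_eq_inner)
qed

lemma Bjk_bound:
  fixes A :: "nat \<Rightarrow> real^'n^'n" and b :: "nat \<Rightarrow> real^'n" and f \<xi> :: "real^'n"
  assumes j: "transpose (A j) = A j" "A j ** A j = A j" and k: "transpose (A k) = A k" "A k ** A k = A k"
  defines "d \<equiv> (A j *v f + b j) - (A k *v f + b k)"
  shows "2 * (\<xi> \<bullet> (mu_hat A b (f + \<xi>) j - mu_hat A b (f + \<xi>) k))
        - (norm (mu_hat A b (f + \<xi>) j - mu_hat A b (f + \<xi>) k))\<^sup>2 / 4
     \<le> (2 * (\<xi> \<bullet> d) - (norm d)\<^sup>2 / 8) + 5/2 * (norm (A j *v \<xi>))\<^sup>2"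
proof -
  define v where "v = A j *v \<xi> - A k *v \<xi>"
  have e: "mu_hat A b (f + \<xi>) j - mu_hat A b (f + \<xi>) k = v + d"
    unfolding mu_hat_def v_def d_def by (simp add: matrix_vector_right_distrib algebra_simps)
  have qj: "\<xi> \<bullet> (A j *v \<xi>) = (norm (A j *v \<xi>))\<^sup>2" by (rule quad_form[OF j])
  have qk: "\<xi> \<bullet> (A k *v \<xi>) = (norm (A k *v \<xi>))\<^sup>2" by (rule quad_form[OF k])
  have xv: "\<xi> \<bullet> v = (norm (A j *v \<xi>))\<^sup>2 - (norm (A k *v \<xi>))\<^sup>2"
    unfolding v_def inner_diff_right qj qk ..
  have n1: "(norm d)\<^sup>2 \<le> 2 * (norm (v + d))\<^sup>2 + 2 * (norm v)\<^sup>2"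
    using norm_diff_sq_le[of "v + d" v] by simp
  have n2: "(norm v)\<^sup>2 \<le> 2 * (norm (A j *v \<xi>))\<^sup>2 + 2 * (norm (A k *v \<xi>))\<^sup>2"
    unfolding v_def by (rule norm_diff_sq_le)
  have "0 \<le> (norm (A k *v \<xi>))\<^sup>2" by simp
  then show ?thesis unfolding e inner_add_right xv using n1 n2
    by (simp only: algebra_simps add_divide_distrib diff_divide_distrib; linarith)
qed

theorem propositionD4:
  fixes P :: "'a measure" and \<xi> :: "'a \<Rightarrow> real^'n" and f :: "real^'n" and K :: real
    and M :: nat and A :: "nat \<Rightarrow> real^'n^'n" and b :: "nat \<Rightarrow> real^'n"
    and \<pi> :: "nat \<Rightarrow> real" and Khat :: "'a \<Rightarrow> real" and \<theta>hat :: "'a \<Rightarrow> nat \<Rightarrow> real"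
    and x :: real
  assumes "prob_space P"
    and "\<xi> \<in> borel_measurable P"
    and "K > 0" and "subgaussian P \<xi> K"
    and "\<And>K'. 0 < K' \<Longrightarrow> K' < K \<Longrightarrow> \<not> subgaussian P \<xi> K'"
    and "M \<ge> 2"
    and "\<And>j. j \<in> {1..M} \<Longrightarrow> transpose (A j) = A j \<and> A j ** A j = A j"
    and "\<pi> \<in> Lsimplex M" and "\<And>j. j \<in> {1..M} \<Longrightarrow> \<pi> j > 0"
    and "\<And>j. j \<in> {1..M} \<Longrightarrow> trace (A j) \<le> ln (1 / \<pi> j)"
    and "Khat \<in> borel_measurable P" and "\<And>\<omega>. Khat \<omega> > 0"
    and "\<And>\<omega>. \<theta>hat \<omega> \<in> Lsimplex M"
    and "\<And>\<omega> \<theta>. \<theta> \<in> Lsimplex M \<Longrightarrow>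
           U M A b \<pi> (Khat \<omega>) (f + \<xi> \<omega>) (\<theta>hat \<omega>) \<le> U M A b \<pi> (Khat \<omega>) (f + \<xi> \<omega>) \<theta>"
    and "x > 0"
  shows "\<exists>E \<in> sets P.
     measure P E \<ge> 1 - measure P {\<omega>\<in>space P. (Khat \<omega>)\<^sup>2 < K\<^sup>2} - 2 * exp (- x) \<and>
     (\<forall>\<omega>\<in>E. (norm (mu_theta M A b (f + \<xi> \<omega>) (\<theta>hat \<omega>) - f))\<^sup>2 \<le>
        (MIN j\<in>{1..M}. (norm (mu_hat A b (f + \<xi> \<omega>) j - f))\<^sup>2 + 64 * (Khat \<omega>)\<^sup>2 * ln (1 / \<pi> j))
        + 28 * K\<^sup>2 * x)"
proof -
  interpret P: prob_space P by fact
  note P = \<open>prob_space P\<close> and xm = \<open>\<xi> \<in> borel_measurable P\<close> and K = \<open>K > 0\<close>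
    and sg = \<open>subgaussian P \<xi> K\<close>
  define I where "I = {1..M}"
  have finI: "finite I" and neI: "I \<noteq> {}" using \<open>M \<ge> 2\<close> by (auto simp: I_def)
  define L where "L j = ln (1 / \<pi> j)" for j
  define Q where "Q j \<omega> = (norm (A j *v \<xi> \<omega>))\<^sup>2" for j \<omega>
  define d where "d j k = (A j *v f + b j) - (A k *v f + b k)" for j k
  define lin where "lin j k \<omega> = 2 * (\<xi> \<omega> \<bullet> d j k) - (norm (d j k))\<^sup>2 / 8" for j k \<omega>
  define BK where "BK = {\<omega>\<in>space P. (Khat \<omega>)\<^sup>2 < K\<^sup>2}"
  define BQ where "BQ j = {\<omega>\<in>space P. 4*K\<^sup>2*(3/2 * L j + x) < Q j \<omega>}" for j
  define BL where "BL jk = {\<omega>\<in>space P. 16*K\<^sup>2*(L (fst jk) + L (snd jk) + x) < lin (fst jk) (snd jk) \<omega>}" for jk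
  define Bad where "Bad = BK \<union> (\<Union>j\<in>I. BQ j) \<union> (\<Union>jk\<in>I\<times>I. BL jk)"
  define E where "E = space P - Bad"
  have pipos: "\<And>j. j \<in> I \<Longrightarrow> 0 < \<pi> j" using assms(9) by (simp add: I_def)
  have sumpi: "(\<Sum>j\<in>I. \<pi> j) = 1" using \<open>\<pi> \<in> Lsimplex M\<close> by (simp add: Lsimplex_def I_def)
  have pile: "\<pi> j \<le> 1" if "j \<in> I" for j
  proof -
    have "\<pi> j \<le> (\<Sum>i\<in>I. \<pi> i)"
      using that finI pipos by (intro member_le_sum) (auto intro: less_imp_le)
    then show ?thesis using sumpi by simp
  qed
  have L0: "0 \<le> L j" if "j \<in> I" for j
    using pipos[OF that] pile[OF that] by (simp add: L_def)
  have expL: "exp (- L j) = \<pi> j" if "j \<in> I" for j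
    using pipos[OF that] by (simp add: L_def ln_div)
  have symA: "transpose (A j) = A j" "A j ** A j = A j" if "j \<in> I" for j
    using assms(7) that by (auto simp: I_def)
  have trA: "trace (A j) \<le> L j" if "j \<in> I" for j
    using assms(10) that by (auto simp: I_def L_def)
  have mQ: "(\<lambda>\<omega>. Q j \<omega>) \<in> borel_measurable P" for j
    unfolding Q_def
    by (rule borel_measurable_continuous_on[OF _ xm]) (intro continuous_intros linear_continuous_on matrix_vector_mul_bounded_linear)
  have mlin: "(\<lambda>\<omega>. lin j k \<omega>) \<in> borel_measurable P" for j k
  proof -
    have "(\<lambda>\<omega>. \<xi> \<omega> \<bullet> d j k) \<in> borel_measurable P" by (rule measurable_compose[OF xm]) simp
    then show ?thesis unfolding lin_def by measurable
  qed
  have sBK: "BK \<in> sets P" unfolding BK_def using \<open>Khat \<in> borel_measurable P\<close> by measurable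
  have sBQ: "BQ j \<in> sets P" for j unfolding BQ_def using mQ[of j] by measurable
  have sBL: "BL jk \<in> sets P" for jk unfolding BL_def using mlin[of "fst jk" "snd jk"] by measurable
  have sU1: "(\<Union>j\<in>I. BQ j) \<in> sets P" using finI sBQ by auto
  have sU2: "(\<Union>jk\<in>I\<times>I. BL jk) \<in> sets P" using finI sBL by auto
  have sBad: "Bad \<in> sets P" unfolding Bad_def using sBK sU1 sU2 by auto
  have mBQ: "measure P (BQ j) \<le> \<pi> j * exp (- x)" if "j \<in> I" for j
  proof -
    have "emeasure P (BQ j) \<le> ennreal (exp (trace (A j) / 2 - (3/2 * L j + x)))"
      unfolding BQ_def Q_def by (rule Q_tail[OF P xm sg K symA[OF that]])
    also have "\<dots> \<le> ennreal (exp (- L j - x))"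
      using trA[OF that] by (intro ennreal_leI) simp
    also have "exp (- L j - x) = \<pi> j * exp (- x)"
      using expL[OF that] by (simp add: exp_diff exp_minus field_simps)
    finally show ?thesis using pipos[OF that]
      by (simp add: P.emeasure_eq_measure ennreal_le_iff)
  qed
  have mBL: "measure P (BL jk) \<le> \<pi> (fst jk) * \<pi> (snd jk) * exp (- x)" if "jk \<in> I \<times> I" for jk
  proof -
    have j: "fst jk \<in> I" and k: "snd jk \<in> I" using that by auto
    have "emeasure P (BL jk) \<le> ennreal (exp (- (L (fst jk) + L (snd jk) + x)))"
      unfolding BL_def lin_def by (rule lin_tail[OF P xm sg K])
    also have "exp (- (L (fst jk) + L (snd jk) + x)) = \<pi> (fst jk) * \<pi> (snd jk) * exp (- x)"
    proof -
      have "exp (- (L (fst jk) + L (snd jk) + x)) = exp (- L (fst jk)) * exp (- L (snd jk)) * exp (- x)"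
        by (simp add: exp_add[symmetric])
      then show ?thesis using expL[OF j] expL[OF k] by simp
    qed
    finally show ?thesis using pipos[OF j] pipos[OF k]
      by (simp add: P.emeasure_eq_measure ennreal_le_iff)
  qed
  have m1: "measure P (\<Union>j\<in>I. BQ j) \<le> exp (- x)"
  proof -
    have "measure P (\<Union>j\<in>I. BQ j) \<le> (\<Sum>j\<in>I. measure P (BQ j))"
      using finI sBQ by (intro P.finite_measure_subadditive_finite) auto
    also have "\<dots> \<le> (\<Sum>j\<in>I. \<pi> j * exp (- x))" by (intro sum_mono mBQ)
    also have "\<dots> = exp (- x)" by (simp add: sum_distrib_right[symmetric] sumpi)
    finally show ?thesis .
  qed
  have m2: "measure P (\<Union>jk\<in>I\<times>I. BL jk) \<le> exp (- x)"
  proof -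
    have "measure P (\<Union>jk\<in>I\<times>I. BL jk) \<le> (\<Sum>jk\<in>I\<times>I. measure P (BL jk))"
      using finI sBL by (intro P.finite_measure_subadditive_finite) auto
    also have "\<dots> \<le> (\<Sum>jk\<in>I\<times>I. \<pi> (fst jk) * \<pi> (snd jk) * exp (- x))" by (intro sum_mono mBL)
    also have "\<dots> = (\<Sum>j\<in>I. \<Sum>k\<in>I. \<pi> j * \<pi> k * exp (- x))"
      by (simp add: sum.cartesian_product case_prod_beta)
    also have "\<dots> = exp (- x)"
      by (simp add: sum_distrib_right[symmetric] sum_distrib_left[symmetric] sumpi)
    finally show ?thesis .
  qed
  have mBad: "measure P Bad \<le> measure P BK + 2 * exp (- x)"
  proof -
    have "measure P Bad \<le> measure P (BK \<union> (\<Union>j\<in>I. BQ j)) + measure P (\<Union>jk\<in>I\<times>I. BL jk)"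
      unfolding Bad_def using sBK sU1 sU2 by (intro measure_Un_le) auto
    also have "\<dots> \<le> measure P BK + measure P (\<Union>j\<in>I. BQ j) + measure P (\<Union>jk\<in>I\<times>I. BL jk)"
      using measure_Un_le[OF sBK sU1] by simp
    finally show ?thesis using m1 m2 by simp
  qed
  have Esets: "E \<in> sets P" unfolding E_def using sBad by auto
  have mE: "measure P E \<ge> 1 - measure P {\<omega>\<in>space P. (Khat \<omega>)\<^sup>2 < K\<^sup>2} - 2 * exp (- x)"
    unfolding E_def P.prob_compl[OF sBad] using mBad by (simp add: BK_def)
  have good: "(norm (mu_theta M A b (f + \<xi> \<omega>) (\<theta>hat \<omega>) - f))\<^sup>2 \<le>
        (MIN j\<in>{1..M}. (norm (mu_hat A b (f + \<xi> \<omega>) j - f))\<^sup>2 + 64 * (Khat \<omega>)\<^sup>2 * ln (1 / \<pi> j))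
        + 28 * K\<^sup>2 * x" if "\<omega> \<in> E" for \<omega>
  proof -
    have \<omega>: "\<omega> \<in> space P" "\<omega> \<notin> BK" "\<And>j. j \<in> I \<Longrightarrow> \<omega> \<notin> BQ j" "\<And>j k. j \<in> I \<Longrightarrow> k \<in> I \<Longrightarrow> \<omega> \<notin> BL (j, k)"
      using that unfolding E_def Bad_def by auto
    have Kh: "K\<^sup>2 \<le> (Khat \<omega>)\<^sup>2" using \<omega>(1,2) unfolding BK_def by auto
    have Qb: "Q j \<omega> \<le> 4*K\<^sup>2*(3/2 * L j + x)" if "j \<in> I" for j
      using \<omega>(1) \<omega>(3)[OF that] unfolding BQ_def by auto
    have Lb: "lin j k \<omega> \<le> 16*K\<^sup>2*(L j + L k + x)" if "j \<in> I" "k \<in> I" for j k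
      using \<omega>(1) \<omega>(4)[OF that] unfolding BL_def by auto
    let ?g = "\<lambda>j. (norm (mu_hat A b (f + \<xi> \<omega>) j - f))\<^sup>2 + 64 * (Khat \<omega>)\<^sup>2 * ln (1 / \<pi> j)"
    have each: "(norm (mu_theta M A b (f + \<xi> \<omega>) (\<theta>hat \<omega>) - f))\<^sup>2 \<le> ?g k + 28 * K\<^sup>2 * x"
      if k: "k \<in> I" for k
    proof -
      have B: "2 * (\<xi> \<omega> \<bullet> (mu_hat A b (f + \<xi> \<omega>) j - mu_hat A b (f + \<xi> \<omega>) k))
        - (norm (mu_hat A b (f + \<xi> \<omega>) j - mu_hat A b (f + \<xi> \<omega>) k))\<^sup>2 / 4
        \<le> 32 * (Khat \<omega>)\<^sup>2 * (ln (1 / \<pi> j) + ln (1 / \<pi> k)) + 28 * K\<^sup>2 * x" if j: "j \<in> {1..M}" for j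
      proof -
        have jI: "j \<in> I" using j by (simp add: I_def)
        have "2 * (\<xi> \<omega> \<bullet> (mu_hat A b (f + \<xi> \<omega>) j - mu_hat A b (f + \<xi> \<omega>) k))
          - (norm (mu_hat A b (f + \<xi> \<omega>) j - mu_hat A b (f + \<xi> \<omega>) k))\<^sup>2 / 4
          \<le> lin j k \<omega> + 5/2 * Q j \<omega>"
          unfolding lin_def Q_def d_def by (rule Bjk_bound[OF symA[OF jI] symA[OF k]])
        also have "\<dots> \<le> 16*K\<^sup>2*(L j + L k + x) + 5/2 * (4*K\<^sup>2*(3/2 * L j + x))"
          using Lb[OF jI k] Qb[OF jI] by simp
        also have "\<dots> \<le> 32 * K\<^sup>2 * (L j + L k) + 28 * K\<^sup>2 * x"
        proof -
          have "0 \<le> K\<^sup>2 * L j" "0 \<le> K\<^sup>2 * x" "0 \<le> K\<^sup>2 * L k" using L0[OF jI] L0[OF k] \<open>x > 0\<close> by auto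
          then show ?thesis by (simp add: algebra_simps)
        qed
        also have "\<dots> \<le> 32 * (Khat \<omega>)\<^sup>2 * (L j + L k) + 28 * K\<^sup>2 * x"
          using Kh L0[OF jI] L0[OF k] by (intro add_right_mono mult_right_mono mult_left_mono) auto
        finally show ?thesis unfolding L_def .
      qed
      have "(norm (mu_theta M A b (f + \<xi> \<omega>) (\<theta>hat \<omega>) - f))\<^sup>2 \<le>
          (norm (mu_hat A b (f + \<xi> \<omega>) k - f))\<^sup>2 + 64 * (Khat \<omega>)\<^sup>2 * ln (1 / \<pi> k) + 28 * K\<^sup>2 * x"
        by (rule det_bound[OF assms(13)[of \<omega>] _ assms(14) B]) (use k in \<open>simp add: I_def\<close>)
      then show ?thesis by simp
    qed
    have "Min (?g ` I) \<in> ?g ` I" using finI neI by (intro Min_in) auto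
    then obtain k where k: "k \<in> I" and kmin: "Min (?g ` I) = ?g k" by auto
    show ?thesis using each[OF k] kmin unfolding I_def by simp
  qed
  show ?thesis using Esets mE good by blast
qed

end
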